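(* Let $\mathbb{F}$ be an infinite field with $\operatorname{char}(\mathbb{F})\neq 2$ and let $G$ be a non-abelian group with a group involution $\ast$ and a non-trivial orientation $\sigma:G\to\{\pm1\}$ such that $gg^\ast\in N=\ker\sigma$ for all $g\in G$. Suppose $\mathbb{F}G$ is normal with respect to the oriented involution $\circledast$ and that $N$, with the restriction of $\ast$, is an SLC-group with unique non-identity commutator $s$. Then there exists $g_0\in G\setminus N$ such that $g_0\in C_G(N)$ and $g_0^\ast=sg_0$. Consequently, $g_0$ is central in $G$.
   Context: A group involution on $G$ is a map $\ast:G\to G$ with $(gh)^\ast=h^\ast g^\ast$ and $(g^\ast)^\ast=g$. An orientation is a group homomorphism $\sigma:G\to\{\pm1\}$. The oriented involution is $(\sum_g\alpha_g g)^\circledast=\sum_g\alpha_g\sigma(g)g^\ast$ on $\mathbb{F}G$. $\mathbb{F}G$ is normal if $\alpha\alpha^\circledast=\alpha^\circledast\alpha$ for all $\alpha\in\mathbb{F}G$. $C_G(N)$ is the centralizer of $N$ in $G$. $(g,h)=g^{-1}h^{-1}gh$. A group $H$ is an LC-group if it is non-abelian and for all $g,h\in H$: $gh=hg$ iff at least one of $g,h,gh$ is in $\zeta(H)$. $H$ with involution $\ast$ is an SLC-group if it is an LC-group with a unique non-identity commutator $s$ (i.e. $\{(g,h):g,h\in H\}=\{1,s\}$) and $h^\ast=h$ for $h\in\zeta(H)$, $h^\ast=sh$ for $h\notin\zeta(H)$. *)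

theory Defs
  imports "HOL-Algebra.Group"
begin

definition group_involution :: "('g, 'b) monoid_scheme \<Rightarrow> ('g \<Rightarrow> 'g) \<Rightarrow> bool" where
  "group_involution G st \<longleftrightarrow>
     (\<forall>g\<in>carrier G. st g \<in> carrier G) \<and>
     (\<forall>g\<in>carrier G. \<forall>h\<in>carrier G. st (g \<otimes>\<^bsub>G\<^esub> h) = st h \<otimes>\<^bsub>G\<^esub> st g) \<and>
     (\<forall>g\<in>carrier G. st (st g) = g)"

definition orientation :: "('g, 'b) monoid_scheme \<Rightarrow> ('g \<Rightarrow> int) \<Rightarrow> bool" where
  "orientation G \<sigma> \<longleftrightarrow>
     (\<forall>g\<in>carrier G. \<sigma> g \<in> {1, -1}) \<and>
     (\<forall>g\<in>carrier G. \<forall>h\<in>carrier G. \<sigma> (g \<otimes>\<^bsub>G\<^esub> h) = \<sigma> g * \<sigma> h)"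

definition orient_kernel :: "('g, 'b) monoid_scheme \<Rightarrow> ('g \<Rightarrow> int) \<Rightarrow> 'g set" where
  "orient_kernel G \<sigma> = {g \<in> carrier G. \<sigma> g = 1}"

text \<open>Elements of the group algebra FG: finitely supported functions on carrier G.\<close>
definition gr_elem :: "('g, 'b) monoid_scheme \<Rightarrow> ('g \<Rightarrow> 'f::field) \<Rightarrow> bool" where
  "gr_elem G a \<longleftrightarrow> (\<forall>x. x \<notin> carrier G \<longrightarrow> a x = 0) \<and> finite {x. a x \<noteq> 0}"

definition gr_mult :: "('g, 'b) monoid_scheme \<Rightarrow> ('g \<Rightarrow> 'f::field) \<Rightarrow> ('g \<Rightarrow> 'f) \<Rightarrow> 'g \<Rightarrow> 'f" where
  "gr_mult G a b x = (\<Sum>p\<in>{p \<in> {g. a g \<noteq> 0} \<times> {h. b h \<noteq> 0}. fst p \<otimes>\<^bsub>G\<^esub> snd p = x}.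
                         a (fst p) * b (snd p))"

text \<open>Oriented involution: (\<Sum> a_g g) \<mapsto> \<Sum> a_g \<sigma>(g) g*, i.e. coefficient at x is \<sigma>(x*) a(x*).\<close>
definition oriented_inv :: "('g, 'b) monoid_scheme \<Rightarrow> ('g \<Rightarrow> 'g) \<Rightarrow> ('g \<Rightarrow> int) \<Rightarrow> ('g \<Rightarrow> 'f::field) \<Rightarrow> 'g \<Rightarrow> 'f" where
  "oriented_inv G st \<sigma> a x = (if x \<in> carrier G then of_int (\<sigma> (st x)) * a (st x) else 0)"

definition gr_normal :: "('g, 'b) monoid_scheme \<Rightarrow> ('g \<Rightarrow> 'g) \<Rightarrow> ('g \<Rightarrow> int) \<Rightarrow> 'f::field itself \<Rightarrow> bool" where
  "gr_normal G st \<sigma> TYPE('f) \<longleftrightarrow>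
     (\<forall>a :: 'g \<Rightarrow> 'f. gr_elem G a \<longrightarrow>
        gr_mult G a (oriented_inv G st \<sigma> a) = gr_mult G (oriented_inv G st \<sigma> a) a)"

definition commutator :: "('g, 'b) monoid_scheme \<Rightarrow> 'g \<Rightarrow> 'g \<Rightarrow> 'g" where
  "commutator G g h = inv\<^bsub>G\<^esub> g \<otimes>\<^bsub>G\<^esub> inv\<^bsub>G\<^esub> h \<otimes>\<^bsub>G\<^esub> g \<otimes>\<^bsub>G\<^esub> h"

definition sub_center :: "('g, 'b) monoid_scheme \<Rightarrow> 'g set \<Rightarrow> 'g set" where
  "sub_center G H = {z \<in> H. \<forall>h\<in>H. z \<otimes>\<^bsub>G\<^esub> h = h \<otimes>\<^bsub>G\<^esub> z}"

definition LC_group :: "('g, 'b) monoid_scheme \<Rightarrow> 'g set \<Rightarrow> bool" where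
  "LC_group G H \<longleftrightarrow>
     (\<exists>g\<in>H. \<exists>h\<in>H. g \<otimes>\<^bsub>G\<^esub> h \<noteq> h \<otimes>\<^bsub>G\<^esub> g) \<and>
     (\<forall>g\<in>H. \<forall>h\<in>H. g \<otimes>\<^bsub>G\<^esub> h = h \<otimes>\<^bsub>G\<^esub> g \<longleftrightarrow>
        (g \<in> sub_center G H \<or> h \<in> sub_center G H \<or> g \<otimes>\<^bsub>G\<^esub> h \<in> sub_center G H))"

definition SLC_group :: "('g, 'b) monoid_scheme \<Rightarrow> 'g set \<Rightarrow> ('g \<Rightarrow> 'g) \<Rightarrow> 'g \<Rightarrow> bool" where
  "SLC_group G H st s \<longleftrightarrow>
     LC_group G H \<and> s \<noteq> \<one>\<^bsub>G\<^esub> \<and>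
     {commutator G g h | g h. g \<in> H \<and> h \<in> H} = {\<one>\<^bsub>G\<^esub>, s} \<and>
     (\<forall>h\<in>H. st h = (if h \<in> sub_center G H then h else s \<otimes>\<^bsub>G\<^esub> h))"

end

theory Submission
  imports Defs
begin

lemma gr_mult_expand:
  assumes "finite A" "finite B" "{g. a g \<noteq> 0} \<subseteq> A" "{h. b h \<noteq> 0} \<subseteq> B"
  shows "gr_mult G a b z = (\<Sum>g\<in>A. \<Sum>h\<in>B. if g \<otimes>\<^bsub>G\<^esub> h = z then a g * b h else 0)"
proof -
  let ?S = "{g. a g \<noteq> 0} \<times> {h. b h \<noteq> 0}"
  have fS: "finite ?S" using assms by (meson finite_SigmaI finite_subset)
  have "gr_mult G a b z = (\<Sum>p\<in>?S. if fst p \<otimes>\<^bsub>G\<^esub> snd p = z then a (fst p) * b (snd p) else 0)"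
    unfolding gr_mult_def using sum.inter_filter[OF fS] by simp
  also have "\<dots> = (\<Sum>p\<in>A \<times> B. if fst p \<otimes>\<^bsub>G\<^esub> snd p = z then a (fst p) * b (snd p) else 0)"
    by (rule sum.mono_neutral_left) (use assms in auto)
  also have "\<dots> = (\<Sum>g\<in>A. \<Sum>h\<in>B. if g \<otimes>\<^bsub>G\<^esub> h = z then a g * b h else 0)"
    by (simp add: sum.cartesian_product case_prod_beta)
  finally show ?thesis .
qed

lemma st_facts:
  assumes "group_involution G st" "x \<in> carrier G"
  shows "st x \<in> carrier G" "st (st x) = x"
  using assms unfolding group_involution_def by auto

lemma st_eq_iff:
  assumes "group_involution G st" "x \<in> carrier G" "z \<in> carrier G"
  shows "st z = x \<longleftrightarrow> z = st x"
  using assms unfolding group_involution_def by metis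

lemma normal_pair:
  fixes G :: "('g,'b) monoid_scheme" and F :: "'f::field itself"
  assumes invol: "group_involution G st" and normal: "gr_normal G st \<sigma> TYPE('f)"
    and x: "x \<in> carrier G" and y: "y \<in> carrier G" and xy: "x \<noteq> y"
  shows "((if x \<otimes>\<^bsub>G\<^esub> st x = z then (of_int (\<sigma> x)::'f) else 0) + (if x \<otimes>\<^bsub>G\<^esub> st y = z then of_int (\<sigma> y) else 0))
       + ((if y \<otimes>\<^bsub>G\<^esub> st x = z then of_int (\<sigma> x) else 0) + (if y \<otimes>\<^bsub>G\<^esub> st y = z then of_int (\<sigma> y) else 0))
       = ((if st x \<otimes>\<^bsub>G\<^esub> x = z then of_int (\<sigma> x) else 0) + (if st x \<otimes>\<^bsub>G\<^esub> y = z then of_int (\<sigma> x) else 0))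
       + ((if st y \<otimes>\<^bsub>G\<^esub> x = z then of_int (\<sigma> y) else 0) + (if st y \<otimes>\<^bsub>G\<^esub> y = z then of_int (\<sigma> y) else 0))"
proof -
  define \<alpha> :: "'g \<Rightarrow> 'f" where "\<alpha> = (\<lambda>z. (if z = x then 1 else 0) + (if z = y then 1 else 0))"
  define \<beta> :: "'g \<Rightarrow> 'f" where "\<beta> = (\<lambda>z. (if z = st x then of_int (\<sigma> x) else 0) + (if z = st y then of_int (\<sigma> y) else 0))"
  have sx: "st x \<in> carrier G" and sy: "st y \<in> carrier G" using st_facts[OF invol x] st_facts[OF invol y] by auto
  have sxy: "st x \<noteq> st y" using st_facts(2) invol x y xy by metis
  have supa: "{g. \<alpha> g \<noteq> 0} \<subseteq> {x, y}" unfolding \<alpha>_def by auto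
  have supb: "{g. \<beta> g \<noteq> 0} \<subseteq> {st x, st y}" unfolding \<beta>_def by auto
  have el: "gr_elem G \<alpha>" unfolding gr_elem_def
    using supa x y by (auto simp: \<alpha>_def intro: finite_subset)
  have oi: "oriented_inv G st \<sigma> \<alpha> = \<beta>"
  proof
    fix w show "oriented_inv G st \<sigma> \<alpha> w = \<beta> w"
    proof (cases "w \<in> carrier G")
      case True
      then show ?thesis unfolding oriented_inv_def \<alpha>_def \<beta>_def
        using st_eq_iff[OF invol x True] st_eq_iff[OF invol y True] by auto
    next
      case False
      then show ?thesis unfolding oriented_inv_def \<beta>_def using sx sy by auto
    qed
  qed
  have "gr_mult G \<alpha> \<beta> = gr_mult G \<beta> \<alpha>" using normal el oi unfolding gr_normal_def by metis
  then have eq: "gr_mult G \<alpha> \<beta> z = gr_mult G \<beta> \<alpha> z" by simp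
  have l: "gr_mult G \<alpha> \<beta> z = (\<Sum>g\<in>{x,y}. \<Sum>h\<in>{st x, st y}. if g \<otimes>\<^bsub>G\<^esub> h = z then \<alpha> g * \<beta> h else 0)"
    by (rule gr_mult_expand) (use supa supb in auto)
  have r: "gr_mult G \<beta> \<alpha> z = (\<Sum>g\<in>{st x, st y}. \<Sum>h\<in>{x,y}. if g \<otimes>\<^bsub>G\<^esub> h = z then \<beta> g * \<alpha> h else 0)"
    by (rule gr_mult_expand) (use supa supb in auto)
  have v: "\<alpha> x = 1" "\<alpha> y = 1" "\<beta> (st x) = of_int (\<sigma> x)" "\<beta> (st y) = of_int (\<sigma> y)"
    using xy sxy by (simp_all add: \<alpha>_def \<beta>_def)
  have l2: "gr_mult G \<alpha> \<beta> z = ((if x \<otimes>\<^bsub>G\<^esub> st x = z then \<alpha> x * \<beta> (st x) else 0) + (if x \<otimes>\<^bsub>G\<^esub> st y = z then \<alpha> x * \<beta> (st y) else 0))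
       + ((if y \<otimes>\<^bsub>G\<^esub> st x = z then \<alpha> y * \<beta> (st x) else 0) + (if y \<otimes>\<^bsub>G\<^esub> st y = z then \<alpha> y * \<beta> (st y) else 0))"
    unfolding l using xy sxy by simp
  have r2: "gr_mult G \<beta> \<alpha> z = ((if st x \<otimes>\<^bsub>G\<^esub> x = z then \<beta> (st x) * \<alpha> x else 0) + (if st x \<otimes>\<^bsub>G\<^esub> y = z then \<beta> (st x) * \<alpha> y else 0))
       + ((if st y \<otimes>\<^bsub>G\<^esub> x = z then \<beta> (st y) * \<alpha> x else 0) + (if st y \<otimes>\<^bsub>G\<^esub> y = z then \<beta> (st y) * \<alpha> y else 0))"
    unfolding r using xy sxy by simp
  show ?thesis using eq unfolding l2 r2 v by (simp only: mult_1_left mult_1_right)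
qed

lemma normal_single:
  fixes G :: "('g,'b) monoid_scheme" and F :: "'f::field itself"
  assumes invol: "group_involution G st" and normal: "gr_normal G st \<sigma> TYPE('f)"
    and x: "x \<in> carrier G" and sig: "(of_int (\<sigma> x)::'f) \<noteq> 0"
  shows "x \<otimes>\<^bsub>G\<^esub> st x = st x \<otimes>\<^bsub>G\<^esub> x"
proof -
  define \<alpha> :: "'g \<Rightarrow> 'f" where "\<alpha> = (\<lambda>z. (if z = x then 1 else 0))"
  define \<beta> :: "'g \<Rightarrow> 'f" where "\<beta> = (\<lambda>z. (if z = st x then of_int (\<sigma> x) else 0))"
  have sx: "st x \<in> carrier G" using st_facts[OF invol x] by auto
  have supa: "{g. \<alpha> g \<noteq> 0} \<subseteq> {x}" unfolding \<alpha>_def by auto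
  have supb: "{g. \<beta> g \<noteq> 0} \<subseteq> {st x}" unfolding \<beta>_def by auto
  have el: "gr_elem G \<alpha>" unfolding gr_elem_def
    using supa x by (auto simp: \<alpha>_def intro: finite_subset)
  have oi: "oriented_inv G st \<sigma> \<alpha> = \<beta>"
  proof
    fix w show "oriented_inv G st \<sigma> \<alpha> w = \<beta> w"
    proof (cases "w \<in> carrier G")
      case True
      then show ?thesis unfolding oriented_inv_def \<alpha>_def \<beta>_def
        using st_eq_iff[OF invol x True] by auto
    next
      case False
      then show ?thesis unfolding oriented_inv_def \<beta>_def using sx by auto
    qed
  qed
  have "gr_mult G \<alpha> \<beta> = gr_mult G \<beta> \<alpha>" using normal el oi unfolding gr_normal_def by metis
  then have eq: "gr_mult G \<alpha> \<beta> (x \<otimes>\<^bsub>G\<^esub> st x) = gr_mult G \<beta> \<alpha> (x \<otimes>\<^bsub>G\<^esub> st x)" by simp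
  have l: "gr_mult G \<alpha> \<beta> z = (\<Sum>g\<in>{x}. \<Sum>h\<in>{st x}. if g \<otimes>\<^bsub>G\<^esub> h = z then \<alpha> g * \<beta> h else 0)" for z
    by (rule gr_mult_expand) (use supa supb in auto)
  have r: "gr_mult G \<beta> \<alpha> z = (\<Sum>g\<in>{st x}. \<Sum>h\<in>{x}. if g \<otimes>\<^bsub>G\<^esub> h = z then \<beta> g * \<alpha> h else 0)" for z
    by (rule gr_mult_expand) (use supa supb in auto)
  have v: "\<alpha> x = 1" "\<beta> (st x) = of_int (\<sigma> x)"
    by (simp_all add: \<alpha>_def \<beta>_def)
  have "gr_mult G \<alpha> \<beta> (x \<otimes>\<^bsub>G\<^esub> st x) = of_int (\<sigma> x)" by (simp add: l v)
  moreover have "gr_mult G \<beta> \<alpha> (x \<otimes>\<^bsub>G\<^esub> st x) = (if st x \<otimes>\<^bsub>G\<^esub> x = x \<otimes>\<^bsub>G\<^esub> st x then of_int (\<sigma> x) else 0)"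
    by (simp add: r v)
  ultimately show ?thesis using eq sig by (auto split: if_splits)
qed

lemma two_delta:
  fixes p q r t :: 'g
  assumes char: "(2::'f::field) \<noteq> 0"
    and H: "\<forall>z. (if p = z then (1::'f) else 0) + (if q = z then 1 else 0) = (if r = z then 1 else 0) + (if t = z then 1 else 0)"
  shows "(p = r \<and> q = t) \<or> (p = t \<and> q = r)"
  using H[rule_format, of p] H[rule_format, of q] char by (auto split: if_splits)

lemma pair_same:
  fixes G :: "('g,'b) monoid_scheme" and F :: "'f::field itself"
  assumes char: "(2::'f) \<noteq> 0" and invol: "group_involution G st" and normal: "gr_normal G st \<sigma> TYPE('f)"
    and x: "x \<in> carrier G" and y: "y \<in> carrier G" and xy: "x \<noteq> y"
    and sxy: "\<sigma> x = \<sigma> y" and sv: "\<sigma> x = 1 \<or> \<sigma> x = -1"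
  shows "(x \<otimes>\<^bsub>G\<^esub> st y = st x \<otimes>\<^bsub>G\<^esub> y \<and> y \<otimes>\<^bsub>G\<^esub> st x = st y \<otimes>\<^bsub>G\<^esub> x) \<or>
         (x \<otimes>\<^bsub>G\<^esub> st y = st y \<otimes>\<^bsub>G\<^esub> x \<and> y \<otimes>\<^bsub>G\<^esub> st x = st x \<otimes>\<^bsub>G\<^esub> y)"
proof -
  have nz: "(of_int (\<sigma> x)::'f) \<noteq> 0" "(of_int (\<sigma> y)::'f) \<noteq> 0" using sv sxy by auto
  have e0x: "x \<otimes>\<^bsub>G\<^esub> st x = st x \<otimes>\<^bsub>G\<^esub> x" by (rule normal_single[OF invol normal x nz(1)])
  have e0y: "y \<otimes>\<^bsub>G\<^esub> st y = st y \<otimes>\<^bsub>G\<^esub> y" by (rule normal_single[OF invol normal y nz(2)])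
  have "\<forall>z. (if x \<otimes>\<^bsub>G\<^esub> st y = z then (1::'f) else 0) + (if y \<otimes>\<^bsub>G\<^esub> st x = z then 1 else 0)
          = (if st x \<otimes>\<^bsub>G\<^esub> y = z then 1 else 0) + (if st y \<otimes>\<^bsub>G\<^esub> x = z then 1 else 0)"
  proof
    fix z
    note h = normal_pair[OF invol normal x y xy, of z]
    show "(if x \<otimes>\<^bsub>G\<^esub> st y = z then (1::'f) else 0) + (if y \<otimes>\<^bsub>G\<^esub> st x = z then 1 else 0)
          = (if st x \<otimes>\<^bsub>G\<^esub> y = z then 1 else 0) + (if st y \<otimes>\<^bsub>G\<^esub> x = z then 1 else 0)"
      using h sv sxy unfolding e0x e0y by (auto split: if_splits)
  qed
  from two_delta[OF char this] show ?thesis by blast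
qed

lemma pair_mixed:
  fixes G :: "('g,'b) monoid_scheme" and F :: "'f::field itself"
  assumes char: "(2::'f) \<noteq> 0" and invol: "group_involution G st" and normal: "gr_normal G st \<sigma> TYPE('f)"
    and x: "x \<in> carrier G" and y: "y \<in> carrier G" and xy: "x \<noteq> y"
    and sx: "\<sigma> x = -1" and sy: "\<sigma> y = 1"
  shows "(x \<otimes>\<^bsub>G\<^esub> st y = st y \<otimes>\<^bsub>G\<^esub> x \<and> st x \<otimes>\<^bsub>G\<^esub> y = y \<otimes>\<^bsub>G\<^esub> st x) \<or>
         (x \<otimes>\<^bsub>G\<^esub> st y = y \<otimes>\<^bsub>G\<^esub> st x \<and> st x \<otimes>\<^bsub>G\<^esub> y = st y \<otimes>\<^bsub>G\<^esub> x)"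
proof -
  have nz: "(of_int (\<sigma> x)::'f) \<noteq> 0" "(of_int (\<sigma> y)::'f) \<noteq> 0" using sx sy by auto
  have e0x: "x \<otimes>\<^bsub>G\<^esub> st x = st x \<otimes>\<^bsub>G\<^esub> x" by (rule normal_single[OF invol normal x nz(1)])
  have e0y: "y \<otimes>\<^bsub>G\<^esub> st y = st y \<otimes>\<^bsub>G\<^esub> y" by (rule normal_single[OF invol normal y nz(2)])
  have "\<forall>z. (if x \<otimes>\<^bsub>G\<^esub> st y = z then (1::'f) else 0) + (if st x \<otimes>\<^bsub>G\<^esub> y = z then 1 else 0)
          = (if st y \<otimes>\<^bsub>G\<^esub> x = z then 1 else 0) + (if y \<otimes>\<^bsub>G\<^esub> st x = z then 1 else 0)"
  proof
    fix z
    note h = normal_pair[OF invol normal x y xy, of z]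
    show "(if x \<otimes>\<^bsub>G\<^esub> st y = z then (1::'f) else 0) + (if st x \<otimes>\<^bsub>G\<^esub> y = z then 1 else 0)
          = (if st y \<otimes>\<^bsub>G\<^esub> x = z then 1 else 0) + (if y \<otimes>\<^bsub>G\<^esub> st x = z then 1 else 0)"
      using h sx sy unfolding e0x e0y by (auto split: if_splits)
  qed
  from two_delta[OF char this] show ?thesis by blast
qed



lemma (in group) cancel_aux:
  "x \<in> carrier G \<Longrightarrow> y \<in> carrier G \<Longrightarrow> x \<otimes> (inv x \<otimes> y) = y"
  "x \<in> carrier G \<Longrightarrow> y \<in> carrier G \<Longrightarrow> inv x \<otimes> (x \<otimes> y) = y"
  by (simp_all add: m_assoc[symmetric])

lemma (in group) comm_inv:
  "a \<in> carrier G \<Longrightarrow> b \<in> carrier G \<Longrightarrow> inv (commutator G a b) = commutator G b a"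
  by (simp add: commutator_def m_assoc inv_mult_group)

lemma (in group) comm_conj:
  "a \<in> carrier G \<Longrightarrow> b \<in> carrier G \<Longrightarrow> n \<in> carrier G \<Longrightarrow>
   inv n \<otimes> commutator G a b \<otimes> n = commutator G (inv n \<otimes> a \<otimes> n) (inv n \<otimes> b \<otimes> n)"
  by (simp add: commutator_def m_assoc inv_mult_group cancel_aux)

lemma (in group) conj_iff:
  "n \<in> carrier G \<Longrightarrow> x \<in> carrier G \<Longrightarrow> y \<in> carrier G \<Longrightarrow>
   inv n \<otimes> x \<otimes> n = y \<longleftrightarrow> x \<otimes> n = n \<otimes> y"
  by (metis inv_solve_left' m_assoc m_closed inv_closed)

lemma (in group) main_aux:
  fixes st :: "'a \<Rightarrow> 'a" and \<sigma> :: "'a \<Rightarrow> int" and s :: 'a and F :: "'f::field itself"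
  assumes char: "(2::'f) \<noteq> 0" and invol: "group_involution G st" and orient: "orientation G \<sigma>"
    and nontriv: "\<exists>g\<in>carrier G. \<sigma> g \<noteq> 1"
    and ggstar: "\<forall>g\<in>carrier G. g \<otimes> st g \<in> orient_kernel G \<sigma>"
    and normal: "gr_normal G st \<sigma> TYPE('f)"
    and slc: "SLC_group G (orient_kernel G \<sigma>) st s"
  shows "\<exists>g0 \<in> carrier G - orient_kernel G \<sigma>.
           (\<forall>n\<in>orient_kernel G \<sigma>. g0 \<otimes> n = n \<otimes> g0) \<and>
           st g0 = s \<otimes> g0 \<and>
           (\<forall>g\<in>carrier G. g0 \<otimes> g = g \<otimes> g0)"
proof -
  define N where "N = orient_kernel G \<sigma>"
  define Z where "Z = sub_center G N"
  have Nd: "n \<in> N \<longleftrightarrow> n \<in> carrier G \<and> \<sigma> n = 1" for n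
    unfolding N_def orient_kernel_def by auto
  have Zd: "z \<in> Z \<longleftrightarrow> z \<in> N \<and> (\<forall>h\<in>N. z \<otimes> h = h \<otimes> z)" for z
    unfolding Z_def sub_center_def by auto
  have sv: "x \<in> carrier G \<Longrightarrow> \<sigma> x = 1 \<or> \<sigma> x = -1" for x
    using orient unfolding orientation_def by auto
  have smul: "x \<in> carrier G \<Longrightarrow> y \<in> carrier G \<Longrightarrow> \<sigma> (x \<otimes> y) = \<sigma> x * \<sigma> y" for x y
    using orient unfolding orientation_def by auto
  have s1: "\<sigma> \<one> = 1" using smul[of \<one> \<one>] sv[of \<one>] by auto
  have sinv: "x \<in> carrier G \<Longrightarrow> \<sigma> (inv x) = \<sigma> x" for x
    using smul[of "inv x" x] sv[of x] sv[of "inv x"] s1 by auto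
  have stc: "x \<in> carrier G \<Longrightarrow> st x \<in> carrier G" for x
    using invol unfolding group_involution_def by auto
  have stst: "x \<in> carrier G \<Longrightarrow> st (st x) = x" for x
    using invol unfolding group_involution_def by auto
  have stm: "x \<in> carrier G \<Longrightarrow> y \<in> carrier G \<Longrightarrow> st (x \<otimes> y) = st y \<otimes> st x" for x y
    using invol unfolding group_involution_def by auto
  have sst: "x \<in> carrier G \<Longrightarrow> \<sigma> (st x) = \<sigma> x" for x
  proof -
    assume x: "x \<in> carrier G"
    have "\<sigma> (x \<otimes> st x) = 1" using ggstar x unfolding orient_kernel_def by auto
    then show ?thesis using smul[OF x stc[OF x]] sv[OF x] sv[OF stc[OF x]] by auto
  qed
  have Nmul: "a \<in> N \<Longrightarrow> b \<in> N \<Longrightarrow> a \<otimes> b \<in> N" for a b using Nd smul by auto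
  have Ninv: "a \<in> N \<Longrightarrow> inv a \<in> N" for a using Nd sinv by auto
  have notN: "x \<in> carrier G \<Longrightarrow> x \<notin> N \<Longrightarrow> \<sigma> x = -1" for x using Nd sv by auto
  have LC: "\<exists>a\<in>N. \<exists>b\<in>N. a \<otimes> b \<noteq> b \<otimes> a"
    using slc unfolding SLC_group_def LC_group_def N_def by auto
  have s_ne: "s \<noteq> \<one>" using slc unfolding SLC_group_def by auto
  have cset: "{commutator G g h | g h. g \<in> N \<and> h \<in> N} = {\<one>, s}"
    using slc unfolding SLC_group_def N_def by auto
  have stN: "h \<in> N \<Longrightarrow> st h = (if h \<in> Z then h else s \<otimes> h)" for h
    using slc unfolding SLC_group_def Z_def N_def by auto
  have comm: "a \<in> N \<Longrightarrow> b \<in> N \<Longrightarrow> commutator G a b = \<one> \<or> commutator G a b = s" for a b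
    using cset by blast
  obtain a0 b0 where ab0: "a0 \<in> N" "b0 \<in> N" "s = commutator G a0 b0"
    using cset by blast
  have a0c: "a0 \<in> carrier G" and b0c: "b0 \<in> carrier G" using ab0 Nd by auto
  have sN: "s \<in> N" using ab0 Nmul Ninv unfolding commutator_def by auto
  have sc: "s \<in> carrier G" using sN Nd by auto
  have ss: "s \<otimes> s = \<one>"
  proof -
    have "inv s = commutator G b0 a0" using comm_inv[OF a0c b0c] ab0 by simp
    then have "inv s = \<one> \<or> inv s = s" using comm[OF ab0(2) ab0(1)] by auto
    moreover have "inv s \<noteq> \<one>" using s_ne sc by (metis inv_inv inv_one)
    ultimately have "inv s = s" by auto
    then show ?thesis using sc by (metis r_inv)
  qed
  have sZ: "n \<in> N \<Longrightarrow> s \<otimes> n = n \<otimes> s" for n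
  proof -
    assume n: "n \<in> N"
    then have nc: "n \<in> carrier G" using Nd by auto
    have cN: "inv n \<otimes> a0 \<otimes> n \<in> N" "inv n \<otimes> b0 \<otimes> n \<in> N" using Nmul Ninv n ab0 by auto
    have "inv n \<otimes> s \<otimes> n = commutator G (inv n \<otimes> a0 \<otimes> n) (inv n \<otimes> b0 \<otimes> n)"
      using comm_conj[OF a0c b0c nc] ab0 by simp
    then have "inv n \<otimes> s \<otimes> n = \<one> \<or> inv n \<otimes> s \<otimes> n = s" using comm[OF cN] by auto
    then have "s \<otimes> n = n \<otimes> \<one> \<or> s \<otimes> n = n \<otimes> s" using conj_iff[OF nc sc one_closed] conj_iff[OF nc sc sc] by blast
    then show ?thesis using s_ne nc sc by auto
  qed
  have e0: "x \<in> carrier G \<Longrightarrow> x \<otimes> st x = st x \<otimes> x" for x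
  proof -
    assume x: "x \<in> carrier G"
    have "(of_int (\<sigma> x)::'f) \<noteq> 0" using sv[OF x] by auto
    then show ?thesis using normal_single[OF invol normal x] by blast
  qed
  have cZ: "x \<in> carrier G \<Longrightarrow> x \<otimes> st x \<in> Z" for x
  proof (rule ccontr)
    assume x: "x \<in> carrier G" and nz: "x \<otimes> st x \<notin> Z"
    have cN: "x \<otimes> st x \<in> N" using ggstar x N_def by auto
    have "st (x \<otimes> st x) = x \<otimes> st x" using stm[OF x stc[OF x]] stst[OF x] by simp
    moreover have "st (x \<otimes> st x) = s \<otimes> (x \<otimes> st x)" using stN[OF cN] nz by simp
    ultimately show False using s_ne sc x stc[OF x] by auto
  qed
  have stNN: "m \<in> N \<Longrightarrow> st m \<in> N" for m using Nd stc sst by auto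
  have stepA: "st Y = Y" if Y: "Y \<in> carrier G" "Y \<notin> N" and m: "m \<in> N" and nc: "Y \<otimes> m \<noteq> m \<otimes> Y" for Y m
  proof -
    have mc: "m \<in> carrier G" using m Nd by auto
    have sYc: "st Y \<in> carrier G" "st m \<in> carrier G" using stc Y mc by auto
    have m1: "m \<noteq> \<one>" using nc Y by auto
    have Ym: "Y \<otimes> m \<in> carrier G" using Y mc by auto
    have ne: "Y \<noteq> Y \<otimes> m" using m1 Y mc by auto
    have sY: "\<sigma> Y = -1" using notN Y by auto
    have sYm: "\<sigma> Y = \<sigma> (Y \<otimes> m)" using smul[OF Y(1) mc] m Nd by auto
    have D: "(Y \<otimes> st (Y \<otimes> m) = st Y \<otimes> (Y \<otimes> m) \<and> (Y \<otimes> m) \<otimes> st Y = st (Y \<otimes> m) \<otimes> Y) \<or>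
         (Y \<otimes> st (Y \<otimes> m) = st (Y \<otimes> m) \<otimes> Y \<and> (Y \<otimes> m) \<otimes> st Y = st Y \<otimes> (Y \<otimes> m))"
      using pair_same[OF char invol normal Y(1) Ym ne sYm] sY by auto
    have cz: "Y \<otimes> st Y \<in> Z" using cZ Y by auto
    have key: "Y \<otimes> m = st m \<otimes> Y"
    proof -
      have "Y \<otimes> m = st m \<otimes> Y \<or> Y \<otimes> m = m \<otimes> Y"
      proof (rule disjE[OF D])
        assume "Y \<otimes> st (Y \<otimes> m) = st Y \<otimes> (Y \<otimes> m) \<and> (Y \<otimes> m) \<otimes> st Y = st (Y \<otimes> m) \<otimes> Y"
        then have "(Y \<otimes> m) \<otimes> st Y = (st m \<otimes> st Y) \<otimes> Y" using stm Y mc by auto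
        also have "\<dots> = st m \<otimes> (Y \<otimes> st Y)" using e0[OF Y(1)] sYc Y by (simp add: m_assoc)
        also have "\<dots> = (st m \<otimes> Y) \<otimes> st Y" using sYc Y by (simp add: m_assoc)
        finally show ?thesis using sYc Y mc by auto
      next
        assume "Y \<otimes> st (Y \<otimes> m) = st (Y \<otimes> m) \<otimes> Y \<and> (Y \<otimes> m) \<otimes> st Y = st Y \<otimes> (Y \<otimes> m)"
        then have "(Y \<otimes> m) \<otimes> st Y = (st Y \<otimes> Y) \<otimes> m" using sYc Y mc by (simp add: m_assoc)
        also have "\<dots> = (Y \<otimes> st Y) \<otimes> m" using e0[OF Y(1)] by simp
        also have "\<dots> = m \<otimes> (Y \<otimes> st Y)" using cz m Zd by blast
        also have "\<dots> = (m \<otimes> Y) \<otimes> st Y" using sYc Y mc by (simp add: m_assoc)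
        finally show ?thesis using sYc Y mc by auto
      qed
      then show ?thesis using nc by auto
    qed
    have mZ: "m \<notin> Z" using key nc stN[OF m] by auto
    have stm': "st m = s \<otimes> m" using stN[OF m] mZ by auto
    have neYm: "Y \<noteq> m" using Y m by auto
    have D2: "(Y \<otimes> st m = st m \<otimes> Y \<and> st Y \<otimes> m = m \<otimes> st Y) \<or>
         (Y \<otimes> st m = m \<otimes> st Y \<and> st Y \<otimes> m = st m \<otimes> Y)"
      using pair_mixed[OF char invol normal Y(1) mc neYm sY] m Nd by auto
    show ?thesis
    proof (rule disjE[OF D2])
      assume "Y \<otimes> st m = st m \<otimes> Y \<and> st Y \<otimes> m = m \<otimes> st Y"
      then have "Y \<otimes> st m = Y \<otimes> m" using key by simp
      then have "s \<otimes> m = m" using stm' Y sYc mc by auto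
      then show ?thesis using s_ne sc mc by auto
    next
      assume "Y \<otimes> st m = m \<otimes> st Y \<and> st Y \<otimes> m = st m \<otimes> Y"
      then have "st Y \<otimes> m = Y \<otimes> m" using key by simp
      then show ?thesis using sYc Y mc by auto
    qed
  qed
  obtain a b where ab: "a \<in> N" "b \<in> N" "a \<otimes> b \<noteq> b \<otimes> a" using LC by blast
  have ac: "a \<in> carrier G" and bc: "b \<in> carrier G" using ab Nd by auto
  have aZ: "a \<notin> Z" using ab Zd by auto
  have bZ: "b \<notin> Z" using ab Zd by metis
  have abZ: "a \<otimes> b \<notin> Z"
  proof
    assume "a \<otimes> b \<in> Z"
    then have "(a \<otimes> b) \<otimes> a = a \<otimes> (a \<otimes> b)" using Zd ab by blast
    then have "a \<otimes> (b \<otimes> a) = a \<otimes> (a \<otimes> b)" using ac bc by (simp add: m_assoc)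
    then show False using ab ac bc by auto
  qed
  have stepB: "\<exists>g0 \<in> carrier G - N. \<forall>n\<in>N. g0 \<otimes> n = n \<otimes> g0"
  proof (rule ccontr)
    assume nb: "\<not> ?thesis"
    obtain x where x: "x \<in> carrier G" "\<sigma> x \<noteq> 1" using nontriv by blast
    have xN: "x \<notin> N" using x Nd by auto
    have xs: "st x = x" using nb x xN stepA by blast
    have key: "s \<otimes> n \<otimes> x = x \<otimes> n" if n: "n \<in> N" "n \<notin> Z" for n
    proof -
      have nc: "n \<in> carrier G" using n Nd by auto
      have "x \<otimes> n \<in> carrier G - N" using x nc smul[OF x(1) nc] n Nd notN[OF x(1) xN] by auto
      then obtain m where "m \<in> N" "(x \<otimes> n) \<otimes> m \<noteq> m \<otimes> (x \<otimes> n)" using nb by blast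
      then have "st (x \<otimes> n) = x \<otimes> n" using stepA \<open>x \<otimes> n \<in> carrier G - N\<close> by blast
      then show ?thesis using stm[OF x(1) nc] xs stN[OF n(1)] n by simp
    qed
    have ka: "s \<otimes> a \<otimes> x = x \<otimes> a" using key ab aZ by auto
    have kb: "s \<otimes> b \<otimes> x = x \<otimes> b" using key ab bZ by auto
    have kab: "s \<otimes> (a \<otimes> b) \<otimes> x = x \<otimes> (a \<otimes> b)" using key ab abZ Nmul by auto
    have "x \<otimes> (a \<otimes> b) = (x \<otimes> a) \<otimes> b" using x ac bc by (simp add: m_assoc)
    also have "\<dots> = (s \<otimes> a \<otimes> x) \<otimes> b" using ka by simp
    also have "\<dots> = s \<otimes> a \<otimes> (x \<otimes> b)" using x ac bc sc by (simp add: m_assoc)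
    also have "\<dots> = s \<otimes> a \<otimes> (s \<otimes> b \<otimes> x)" using kb by simp
    finally have "s \<otimes> (a \<otimes> (b \<otimes> x)) = s \<otimes> (a \<otimes> (s \<otimes> (b \<otimes> x)))"
      using kab x ac bc sc by (simp add: m_assoc)
    then have "b \<otimes> x = s \<otimes> (b \<otimes> x)" using x ac bc sc by simp
    then show False using s_ne x bc sc by simp
  qed
  then obtain g0 where g0: "g0 \<in> carrier G" "g0 \<notin> N" and cen: "\<forall>n\<in>N. g0 \<otimes> n = n \<otimes> g0" by blast
  have sg0: "\<sigma> g0 = -1" using notN g0 by auto
  have stepC: "st g0 = s \<otimes> g0"
  proof -
    have ga: "g0 \<otimes> a \<in> carrier G" "g0 \<otimes> a \<notin> N" using g0 ac smul[OF g0(1) ac] sg0 ab Nd by auto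
    have "(g0 \<otimes> a) \<otimes> b \<noteq> b \<otimes> (g0 \<otimes> a)"
    proof
      assume "(g0 \<otimes> a) \<otimes> b = b \<otimes> (g0 \<otimes> a)"
      moreover have "(g0 \<otimes> a) \<otimes> b = g0 \<otimes> (a \<otimes> b)" using g0 ac bc by (simp add: m_assoc)
      moreover have "b \<otimes> (g0 \<otimes> a) = (b \<otimes> g0) \<otimes> a" using g0 ac bc by (simp add: m_assoc)
      moreover have "b \<otimes> g0 = g0 \<otimes> b" using cen ab by simp
      moreover have "(g0 \<otimes> b) \<otimes> a = g0 \<otimes> (b \<otimes> a)" using g0 ac bc by (simp add: m_assoc)
      ultimately have "g0 \<otimes> (a \<otimes> b) = g0 \<otimes> (b \<otimes> a)" by simp
      then show False using ab g0 ac bc by simp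
    qed
    then have "st (g0 \<otimes> a) = g0 \<otimes> a" using stepA ga ab by blast
    then have "s \<otimes> a \<otimes> st g0 = a \<otimes> g0" using stm[OF g0(1) ac] stN[OF ab(1)] aZ cen ab by simp
    then have "a \<otimes> (s \<otimes> st g0) = a \<otimes> g0" using sZ[OF ab(1)] ac sc stc[OF g0(1)] by (simp add: m_assoc[symmetric])
    then have "s \<otimes> st g0 = g0" using ac sc stc[OF g0(1)] g0 by simp
    then have "s \<otimes> (s \<otimes> st g0) = s \<otimes> g0" by simp
    then show ?thesis using ss sc stc[OF g0(1)] by (simp add: m_assoc[symmetric])
  qed
  have stepD: "\<forall>g\<in>carrier G. g0 \<otimes> g = g \<otimes> g0"
  proof
    fix g assume g: "g \<in> carrier G"
    show "g0 \<otimes> g = g \<otimes> g0"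
    proof (cases "g \<in> N")
      case True then show ?thesis using cen by auto
    next
      case False
      have n: "inv g0 \<otimes> g \<in> N" using Nd smul[of "inv g0" g] sinv g0 sg0 notN[OF g False] g by auto
      have gg: "g = g0 \<otimes> (inv g0 \<otimes> g)" using g g0 by (simp add: cancel_aux)
      define k where "k = inv g0 \<otimes> g"
      have kc: "k \<in> carrier G" using g g0 k_def by simp
      have ck: "g0 \<otimes> k = k \<otimes> g0" using cen n k_def by simp
      have "(g0 \<otimes> k) \<otimes> g0 = g0 \<otimes> (k \<otimes> g0)" using kc g0 by (simp add: m_assoc)
      then have "g0 \<otimes> (g0 \<otimes> (inv g0 \<otimes> g)) = (g0 \<otimes> (inv g0 \<otimes> g)) \<otimes> g0"
        using ck k_def by simp
      then show ?thesis using gg by simp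
    qed
  qed
  show ?thesis using g0 cen stepC stepD unfolding N_def by blast
qed


theorem lemma11:
  fixes G :: "('g, 'b) monoid_scheme" and st :: "'g \<Rightarrow> 'g" and \<sigma> :: "'g \<Rightarrow> int"
    and s :: 'g and F :: "'f::field itself"
  assumes inf: "infinite (UNIV :: 'f set)"
    and char: "(2::'f) \<noteq> 0"
    and grp: "group G"
    and nonab: "\<exists>g\<in>carrier G. \<exists>h\<in>carrier G. g \<otimes>\<^bsub>G\<^esub> h \<noteq> h \<otimes>\<^bsub>G\<^esub> g"
    and invol: "group_involution G st"
    and orient: "orientation G \<sigma>"
    and nontriv: "\<exists>g\<in>carrier G. \<sigma> g \<noteq> 1"
    and ggstar: "\<forall>g\<in>carrier G. g \<otimes>\<^bsub>G\<^esub> st g \<in> orient_kernel G \<sigma>"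
    and normal: "gr_normal G st \<sigma> TYPE('f)"
    and slc: "SLC_group G (orient_kernel G \<sigma>) st s"
  shows "\<exists>g0 \<in> carrier G - orient_kernel G \<sigma>.
           (\<forall>n\<in>orient_kernel G \<sigma>. g0 \<otimes>\<^bsub>G\<^esub> n = n \<otimes>\<^bsub>G\<^esub> g0) \<and>
           st g0 = s \<otimes>\<^bsub>G\<^esub> g0 \<and>
           (\<forall>g\<in>carrier G. g0 \<otimes>\<^bsub>G\<^esub> g = g \<otimes>\<^bsub>G\<^esub> g0)"
  using group.main_aux[OF grp char invol orient nontriv ggstar normal slc] by simp

end
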